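(* Let $n \geq 1$. There exist $6n+3$ products $P_1,\dots,P_{6n+3}$, each of the form $P_t = L_t M_t$ where $L_t$ and $M_t$ are $\mathbb{Z}$-linear combinations of the $3n+9$ indeterminates $a_{ij}$ ($1\le i\le n$, $1\le j\le 3$) and $b_{jk}$ ($1\le j,k\le 3$), such that for every $1\le i\le n$ and $1\le k\le 3$ the polynomial $\sum_{j=1}^3 a_{ij}b_{jk}$ is a $\mathbb{Z}$-linear combination of $P_1,\dots,P_{6n+3}$ in the commutative polynomial ring $\mathbb{Z}[a_{ij}, b_{jk}]$. Consequently, for every commutative ring $R$, every $n\times 3$ matrix $A=(a_{ij})$ over $R$ and every $3\times 3$ matrix $B=(b_{jk})$ over $R$, the product $AB$ can be computed using $6n+3$ multiplications.
   Context: "The product can be computed using $k$ multiplications" means: there are $k$ products, each a product of two linear forms with integer coefficients in the entries of $A$ and $B$ (the two factors may each involve entries of both $A$ and $B$; commutativity of $R$ may be used), such that every entry of $AB$ is an integer linear combination of these $k$ products, identically for all inputs. Additions, subtractions and multiplications by integer constants are not counted. *)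

theory Defs
  imports Main "HOL-Library.Poly_Mapping"
begin

datatype var = MA nat nat | MB nat nat

text \<open>The commutative polynomial ring Z[a_ij, b_jk]: integer-valued finitely supported
  functions on monomials, monomials being finitely supported exponent vectors.\<close>
type_synonym zpoly = "(var \<Rightarrow>\<^sub>0 nat) \<Rightarrow>\<^sub>0 int"

definition Xv :: "var \<Rightarrow> zpoly" where
  "Xv v = Poly_Mapping.single (Poly_Mapping.single v 1) 1"

definition vars :: "nat \<Rightarrow> var set" where
  "vars n = {MA i j | i j. i \<in> {1..n} \<and> j \<in> {1..3}} \<union> {MB j k | j k. j \<in> {1..3} \<and> k \<in> {1..3}}"

definition linform :: "nat \<Rightarrow> (var \<Rightarrow> int) \<Rightarrow> zpoly" where
  "linform n c = (\<Sum>v\<in>vars n. of_int (c v) * Xv v)"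

definition linform_eval :: "nat \<Rightarrow> (var \<Rightarrow> int) \<Rightarrow> (nat \<Rightarrow> nat \<Rightarrow> 'r::comm_ring_1)
    \<Rightarrow> (nat \<Rightarrow> nat \<Rightarrow> 'r) \<Rightarrow> 'r" where
  "linform_eval n c a b =
     (\<Sum>v\<in>vars n. of_int (c v) * (case v of MA i j \<Rightarrow> a i j | MB j k \<Rightarrow> b j k))"

end

theory Submission
  imports Defs
begin

definition lf :: "nat \<Rightarrow> (var \<Rightarrow> int) \<Rightarrow> (var \<Rightarrow> 'r::comm_ring_1) \<Rightarrow> 'r" where
  "lf n c x = (\<Sum>v\<in>vars n. of_int (c v) * x v)"

definition ev :: "(nat \<Rightarrow> nat \<Rightarrow> 'r) \<Rightarrow> (nat \<Rightarrow> nat \<Rightarrow> 'r) \<Rightarrow> var \<Rightarrow> 'r" where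
  "ev a b v = (case v of MA i j \<Rightarrow> a i j | MB j k \<Rightarrow> b j k)"

lemma linform_lf: "linform n c = lf n c Xv"
  by (simp add: linform_def lf_def)

lemma linform_eval_lf: "linform_eval n c a b = lf n c (ev a b)"
  by (simp add: linform_eval_def lf_def ev_def)

definition ind :: "var \<Rightarrow> var \<Rightarrow> int" where "ind v = (\<lambda>w. if w = v then 1 else 0)"
definition addc :: "(var \<Rightarrow> int) \<Rightarrow> (var \<Rightarrow> int) \<Rightarrow> var \<Rightarrow> int" where
  "addc c d = (\<lambda>w. c w + d w)"
definition subc :: "(var \<Rightarrow> int) \<Rightarrow> (var \<Rightarrow> int) \<Rightarrow> var \<Rightarrow> int" where
  "subc c d = (\<lambda>w. c w - d w)"

lemma lf_addc: "lf n (addc c d) x = lf n c x + lf n d x"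
  by (simp add: lf_def addc_def sum.distrib distrib_right)

lemma lf_subc: "lf n (subc c d) x = lf n c x - lf n d x"
  by (simp add: lf_def subc_def sum_subtractf left_diff_distrib)

lemma finite_vars: "finite (vars n)"
proof -
  have "vars n \<subseteq> (\<lambda>(i,j). MA i j) ` ({1..n} \<times> {1..3}) \<union> (\<lambda>(j,k). MB j k) ` ({1..3} \<times> {1..3})"
    by (auto simp: vars_def)
  thus ?thesis by (rule finite_subset) auto
qed

lemma lf_ind: "v \<in> vars n \<Longrightarrow> lf n (ind v) x = x v"
proof -
  assume v: "v \<in> vars n"
  have "lf n (ind v) x = (\<Sum>w\<in>vars n. if w = v then x w else 0)"
    unfolding lf_def ind_def by (rule sum.cong) auto
  also have "\<dots> = x v" using v finite_vars by (simp add: sum.delta')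
  finally show ?thesis .
qed

lemma MA_in: "i \<in> {1..n} \<Longrightarrow> j \<in> {1..3} \<Longrightarrow> MA i j \<in> vars n"
  by (auto simp: vars_def)
lemma MB_in: "j \<in> {1..3} \<Longrightarrow> k \<in> {1..3} \<Longrightarrow> MB j k \<in> vars n"
  by (auto simp: vars_def)

abbreviation "A i j \<equiv> ind (MA i j)"
abbreviation "B j k \<equiv> ind (MB j k)"

definition rowL :: "nat \<Rightarrow> nat \<Rightarrow> var \<Rightarrow> int" where
  "rowL i m = (if m = 0 then subc (A i 1) (B 2 2)
    else if m = 1 then subc (A i 2) (B 3 3)
    else if m = 2 then subc (A i 3) (B 1 1)
    else if m = 3 then subc (subc (addc (addc (A i 1) (A i 2)) (B 3 1)) (B 3 2)) (B 3 3)
    else if m = 4 then subc (subc (addc (addc (A i 2) (A i 3)) (B 1 2)) (B 1 1)) (B 1 3)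
    else subc (subc (addc (addc (A i 3) (A i 1)) (B 2 3)) (B 2 1)) (B 2 2))"

definition rowM :: "nat \<Rightarrow> nat \<Rightarrow> var \<Rightarrow> int" where
  "rowM i m = (if m = 0 then subc (A i 2) (B 1 3)
    else if m = 1 then subc (A i 3) (B 2 1)
    else if m = 2 then subc (A i 1) (B 3 2)
    else if m = 3 then A i 3
    else if m = 4 then A i 1
    else A i 2)"

definition globL :: "nat \<Rightarrow> var \<Rightarrow> int" where
  "globL g = (if g = 0 then B 2 1 else if g = 1 then B 1 1 else B 2 2)"
definition globM :: "nat \<Rightarrow> var \<Rightarrow> int" where
  "globM g = (if g = 0 then B 3 3 else if g = 1 then B 3 2 else B 1 3)"

definition rowC :: "nat \<Rightarrow> nat \<Rightarrow> int" where
  "rowC k m = (if k = 1 then (if m = 3 then 1 else if m = 1 \<or> m = 2 then -1 else 0)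
     else if k = 2 then (if m = 4 then 1 else if m = 0 \<or> m = 2 then -1 else 0)
     else (if m = 5 then 1 else if m = 0 \<or> m = 1 then -1 else 0))"

definition globC :: "nat \<Rightarrow> nat \<Rightarrow> int" where
  "globC k g = (if k = 1 then (if g = 0 \<or> g = 1 then 1 else 0)
     else if k = 2 then (if g = 2 \<or> g = 1 then 1 else 0)
     else (if g = 2 \<or> g = 0 then 1 else 0))"

definition LL :: "nat \<Rightarrow> nat \<Rightarrow> var \<Rightarrow> int" where
  "LL n t = (if t < 6*n then rowL (t div 6 + 1) (t mod 6) else globL (t - 6*n))"
definition MM :: "nat \<Rightarrow> nat \<Rightarrow> var \<Rightarrow> int" where
  "MM n t = (if t < 6*n then rowM (t div 6 + 1) (t mod 6) else globM (t - 6*n))"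
definition CC :: "nat \<Rightarrow> nat \<Rightarrow> nat \<Rightarrow> nat \<Rightarrow> int" where
  "CC n i k t = (if t < 6*n then (if t div 6 + 1 = i then rowC k (t mod 6) else 0)
     else globC k (t - 6*n))"

lemma core:
  fixes x :: "var \<Rightarrow> 'r::comm_ring_1"
  assumes i: "i \<in> {1..n}" and k: "k \<in> {1..3}"
  shows "(\<Sum>j=1..3. x (MA i j) * x (MB j k))
     = (\<Sum>t<6*n+3. of_int (CC n i k t) * (lf n (LL n t) x * lf n (MM n t) x))"
proof -
  define f where "f t = of_int (CC n i k t) * (lf n (LL n t) x * lf n (MM n t) x)" for t
  have split: "{..<6*n+3} = {..<6*n} \<union> {6*n..<6*n+3}" by auto
  have S: "(\<Sum>t<6*n+3. f t) = (\<Sum>t<6*n. f t) + (\<Sum>t\<in>{6*n..<6*n+3}. f t)"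
    unfolding split by (rule sum.union_disjoint) auto
  have six: "(\<Sum>t\<in>{a..<a+6}. f t) = f a + f (a+1) + f (a+2) + f(a+3) + f(a+4) + f(a+5)" for a
    by (simp add: numeral_eq_Suc atLeastLessThanSuc add.commute add.left_commute)
  have three: "(\<Sum>t\<in>{a..<a+3}. f t) = f a + f (a+1) + f (a+2)" for a
    by (simp add: numeral_eq_Suc atLeastLessThanSuc add.commute add.left_commute)
  define g where "g r = (\<Sum>t\<in>{r*6..<r*6+6}. f t)" for r
  have G: "(\<Sum>t<6*n. f t) = (\<Sum>r<n. g r)"
    unfolding g_def by (simp add: sum.nat_group mult.commute)
  have gz: "g r = 0" if "r < n" "r \<noteq> i - 1" for r
  proof -
    have "f t = 0" if "t \<in> {r*6..<r*6+6}" for t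
    proof -
      have "t div 6 = r" using that by (auto intro: div_nat_eqI)
      moreover have "t < 6*n" using that \<open>r < n\<close> by auto
      ultimately show ?thesis using \<open>r \<noteq> i - 1\<close> i by (auto simp: f_def CC_def)
    qed
    thus ?thesis unfolding g_def by simp
  qed
  have i1: "i - 1 < n" using i by auto
  have "(\<Sum>r<n. g r) = g (i - 1)"
  proof -
    have "(\<Sum>r<n. g r) = g (i-1) + (\<Sum>r\<in>{..<n} - {i-1}. g r)"
      using i1 by (subst sum.remove[of _ "i-1"]) auto
    also have "(\<Sum>r\<in>{..<n} - {i-1}. g r) = 0" using gz by (intro sum.neutral) auto
    finally show ?thesis by simp
  qed
  hence RS: "(\<Sum>t<6*n. f t) = g (i - 1)" using G by simp
  let ?r = "i - 1"
  have ii: "?r + 1 = i" using i by auto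
  have lt: "6*?r + m < 6*n" if "m < 6" for m using that i1 by linarith
  have fr: "f (?r*6 + m) = of_int (rowC k m) * (lf n (rowL i m) x * lf n (rowM i m) x)" if "m < 6" for m
  proof -
    have "(?r*6 + m) div 6 = ?r" "(?r*6+m) mod 6 = m" using that by auto
    thus ?thesis using lt[OF that] ii by (simp add: f_def CC_def LL_def MM_def mult.commute)
  qed
  have fg: "f (6*n + m) = of_int (globC k m) * (lf n (globL m) x * lf n (globM m) x)" for m
    by (simp add: f_def CC_def LL_def MM_def)
  have g1: "g ?r = (\<Sum>m\<in>{0,1,2,3,4,5}. of_int (rowC k m) * (lf n (rowL i m) x * lf n (rowM i m) x))"
    unfolding g_def six using fr[of 0] fr[of 1] fr[of 2] fr[of 3] fr[of 4] fr[of 5]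
    by (simp add: add.assoc)
  have g2: "(\<Sum>t\<in>{6*n..<6*n+3}. f t) = (\<Sum>m\<in>{0,1,2}. of_int (globC k m) * (lf n (globL m) x * lf n (globM m) x))"
    unfolding three using fg[of 0] fg[of 1] fg[of 2] by (simp add: add.assoc)
  have ain: "\<And>j. j \<in> {1..3} \<Longrightarrow> MA i j \<in> vars n" using i MA_in by blast
  note mem = ain MB_in
  have L: "lf n (A i j) x = x (MA i j)" if "j \<in> {1..3}" for j using ain[OF that] by (rule lf_ind)
  have LB: "lf n (B j k') x = x (MB j k')" if "j \<in> {1..3}" "k' \<in> {1..3}" for j k'
    using MB_in[OF that] by (rule lf_ind)
  have k3: "k = 1 \<or> k = 2 \<or> k = 3" using k by auto
  have "(\<Sum>j=1..3. x (MA i j) * x (MB j k)) = g ?r + (\<Sum>t\<in>{6*n..<6*n+3}. f t)"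
    unfolding g1 g2 using k3
    by (auto simp: rowC_def globC_def rowL_def rowM_def globL_def globM_def lf_addc lf_subc L LB
         numeral_eq_Suc algebra_simps)
  thus ?thesis using S RS unfolding f_def by simp
qed

theorem mainTheorem1:
  fixes n :: nat
  assumes "n \<ge> 1"
  shows "\<exists>(L :: nat \<Rightarrow> var \<Rightarrow> int) (M :: nat \<Rightarrow> var \<Rightarrow> int) (c :: nat \<Rightarrow> nat \<Rightarrow> nat \<Rightarrow> int).
     (\<forall>i\<in>{1..n}. \<forall>k\<in>{1..3}.
        (\<Sum>j=1..3. Xv (MA i j) * Xv (MB j k))
          = (\<Sum>t<6*n+3. of_int (c i k t) * (linform n (L t) * linform n (M t))))
   \<and> (\<forall>(a :: nat \<Rightarrow> nat \<Rightarrow> 'r::comm_ring_1) b. \<forall>i\<in>{1..n}. \<forall>k\<in>{1..3}.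
        (\<Sum>j=1..3. a i j * b j k)
          = (\<Sum>t<6*n+3. of_int (c i k t) * (linform_eval n (L t) a b * linform_eval n (M t) a b)))"
proof (intro exI conjI ballI allI)
  fix i k :: nat assume "i \<in> {1..n}" "k \<in> {1..3}"
  from core[OF this, of Xv]
  show "(\<Sum>j=1..3. Xv (MA i j) * Xv (MB j k))
          = (\<Sum>t<6*n+3. of_int (CC n i k t) * (linform n (LL n t) * linform n (MM n t)))"
    by (simp add: linform_lf)
next
  fix a b :: "nat \<Rightarrow> nat \<Rightarrow> 'r::comm_ring_1" and i k :: nat assume "i \<in> {1..n}" "k \<in> {1..3}"
  from core[OF this, of "ev a b"]
  show "(\<Sum>j=1..3. a i j * b j k)
          = (\<Sum>t<6*n+3. of_int (CC n i k t) * (linform_eval n (LL n t) a b * linform_eval n (MM n t) a b))"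
    by (simp add: linform_eval_lf ev_def)
qed

end
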